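(* Let $A$ satisfy the spectral assumption, $B\in\mathbb{R}^{n\times k}$, and suppose $E_{\mathrm u}^\perp$ and $E_{\mathrm s}$ are $\xi$-close with $\xi\in(0,1)$. Let $\gamma>0$, $\gamma_+>1$, and let $x\in\mathbb{R}^n$ satisfy $\|R_1x\|/\|R_2x\|>\gamma_+$. Let $u\in\mathbb{R}^k$ with $\|u\|\le\alpha\|x\|$, where $$\alpha<\frac{\frac{\gamma_+}{\gamma_++1}\sigma_{\min}(M_1)-\frac{\gamma}{\gamma_+-1}\frac{1}{1-\xi}\|A\|}{\big(1+\frac{\sqrt{2\xi}}{1-\xi}+\frac{\gamma}{1-\xi}\big)\|B\|}.$$ Then $x'=Ax+Bu$ satisfies $\|R_1x'\|/\|R_2x'\|>\gamma$.
   Context: Spectral assumption: $A\in\mathbb{R}^{n\times n}$ diagonalizable with eigenvalues $|\lambda_1|>\cdots\ge|\lambda_k|>1>|\lambda_{k+1}|\ge\cdots\ge|\lambda_n|$. $E_{\mathrm u}$ / $E_{\mathrm s}$: real invariant subspaces associated with $\lambda_1..\lambda_k$ / $\lambda_{k+1}..\lambda_n$. $P_1=Q_1$ has orthonormal columns spanning $E_{\mathrm u}$, $P_2$ orthonormal columns spanning $E_{\mathrm u}^\perp$, $Q_2$ orthonormal columns spanning $E_{\mathrm s}$; $M_1=P_1^\top AP_1$; $Q=[Q_1\ Q_2]$, $Q^{-1}=\begin{bmatrix}R_1\\R_2\end{bmatrix}$. $\xi$-close: $\sigma_{\min}(P_2^\top Q_2)>1-\xi$. $\sigma_{\min}$ is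 the smallest singular value, $\|\cdot\|$ the spectral/Euclidean norm. *)

theory Defs
  imports "HOL-Analysis.Analysis"
begin

definition cmat :: "real^'n^'m \<Rightarrow> complex^'n^'m" where
  "cmat M = map_matrix complex_of_real M"

definition cvec :: "real^'n \<Rightarrow> complex^'n" where
  "cvec x = (\<chi> i. complex_of_real (x $ i))"

definition cdiag :: "('n::finite \<Rightarrow> complex) \<Rightarrow> complex^'n^'n" where
  "cdiag lam = (\<chi> i j. if i = j then lam i else 0)"

definition spectral_assumption ::
  "real^'n^'n \<Rightarrow> complex^'n^'n \<Rightarrow> ('n::finite \<Rightarrow> complex) \<Rightarrow> bool" where
  "spectral_assumption A S lam \<longleftrightarrow>
     invertible S \<and> cmat A ** S = S ** cdiag lam \<and> (\<forall>i. cmod (lam i) \<noteq> 1)"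

text \<open>Real invariant subspace associated with the eigenvalues of modulus > 1
  (resp. < 1): the real vectors lying in the complex span of the corresponding
  eigenvectors (columns of S).\<close>
definition E_u :: "complex^'n^'n \<Rightarrow> ('n::finite \<Rightarrow> complex) \<Rightarrow> (real^'n) set" where
  "E_u S lam = {x. \<exists>c :: complex^'n. (\<forall>i. cmod (lam i) \<le> 1 \<longrightarrow> c $ i = 0) \<and> cvec x = S *v c}"

definition E_s :: "complex^'n^'n \<Rightarrow> ('n::finite \<Rightarrow> complex) \<Rightarrow> (real^'n) set" where
  "E_s S lam = {x. \<exists>c :: complex^'n. (\<forall>i. cmod (lam i) \<ge> 1 \<longrightarrow> c $ i = 0) \<and> cvec x = S *v c}"

definition orthonormal_basis_matrix :: "real^'k^'n \<Rightarrow> (real^'n) set \<Rightarrow> bool" where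
  "orthonormal_basis_matrix P V \<longleftrightarrow> transpose P ** P = mat 1 \<and> range ((*v) P) = V"

definition sigma_min :: "real^'k^'k \<Rightarrow> real" where
  "sigma_min M = sqrt (Min {l. \<exists>v. v \<noteq> 0 \<and> (transpose M ** M) *v v = l *\<^sub>R v})"

definition opnorm :: "real^'k^'n \<Rightarrow> real" where
  "opnorm M = onorm ((*v) M)"

definition block_cols :: "real^'k^'n \<Rightarrow> real^'m^'n \<Rightarrow> real^('k + 'm)^'n" where
  "block_cols Q1 Q2 = (\<chi> i j. case j of Inl a \<Rightarrow> Q1 $ i $ a | Inr b \<Rightarrow> Q2 $ i $ b)"

text \<open>Row blocks R1, R2 of Q^{-1}.\<close>
definition R1 :: "real^'n::finite^('k::finite + 'm::finite) \<Rightarrow> real^'n^'k" where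
  "R1 R = (\<chi> a. R $ Inl a)"

definition R2 :: "real^'n::finite^('k::finite + 'm::finite) \<Rightarrow> real^'n^'m" where
  "R2 R = (\<chi> b. R $ Inr b)"

end

theory Submission
  imports Defs
begin


lemma K_inner: fixes M :: "real^'k^'n"
  shows "((transpose M ** M) *v v) \<bullet> w = (M *v v) \<bullet> (M *v w)"
  by (simp add: matrix_vector_mul_assoc[symmetric] dot_lmul_matrix)

lemma norm_sq_expand: fixes a b :: "'a::real_inner"
  shows "(norm (a + t *\<^sub>R b))^2 = (norm a)^2 + 2*t*(a \<bullet> b) + t^2*(norm b)^2"
  unfolding power2_norm_eq_inner by (simp add: inner_add_left inner_add_right inner_commute algebra_simps power2_eq_square)

lemma sigma_min_both:
  fixes M :: "real^'k^'k"
  shows "sigma_min M \<ge> 0 \<and> sigma_min M * norm v \<le> norm (M *v v)"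
proof -
  define K where "K = transpose M ** M"
  define Ss where "Ss = {l. \<exists>v. v \<noteq> 0 \<and> K *v v = l *\<^sub>R v}"
  have Kin: "(K *v a) \<bullet> b = (M *v a) \<bullet> (M *v b)" for a b unfolding K_def by (rule K_inner)
  have Ksym: "(K *v a) \<bullet> b = a \<bullet> (K *v b)" for a b
    using Kin[of a b] Kin[of b a] by (simp add: inner_commute)
  define f where "f = (\<lambda>l. SOME v. v \<noteq> 0 \<and> K *v v = l *\<^sub>R v)"
  have fS: "f l \<noteq> 0 \<and> K *v f l = l *\<^sub>R f l" if "l \<in> Ss" for l
    using that unfolding Ss_def f_def by (metis (mono_tags, lifting) mem_Collect_eq someI_ex)
  have inj: "inj_on f Ss"
  proof (rule inj_onI)
    fix l1 l2 assume a: "l1 \<in> Ss" "l2 \<in> Ss" "f l1 = f l2"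
    then have "l1 *\<^sub>R f l1 = l2 *\<^sub>R f l1" using fS by metis
    then show "l1 = l2" using fS[OF a(1)] by (simp add: scaleR_cancel_right)
  qed
  have orth: "pairwise orthogonal (f ` Ss)"
  proof (clarsimp simp: pairwise_def)
    fix l1 l2 assume a: "l1 \<in> Ss" "l2 \<in> Ss" "f l1 \<noteq> f l2"
    then have ne: "l1 \<noteq> l2" by auto
    have "l1 * (f l1 \<bullet> f l2) = (K *v f l1) \<bullet> f l2" using fS[OF a(1)] by simp
    also have "\<dots> = f l1 \<bullet> (K *v f l2)" by (rule Ksym)
    also have "\<dots> = l2 * (f l1 \<bullet> f l2)" using fS[OF a(2)] by simp
    finally show "orthogonal (f l1) (f l2)" using ne unfolding orthogonal_def
      by (metis mult_cancel_right)
  qed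
  have "0 \<notin> f ` Ss" using fS by auto
  then have "finite (f ` Ss)" using orth pairwise_orthogonal_independent finiteI_independent by blast
  then have finS: "finite Ss" using inj finite_imageD by blast
  define g where "g = (\<lambda>v. (norm (M *v v))^2)"
  have contg: "continuous_on (sphere 0 1) g" unfolding g_def
    by (intro continuous_intros)
  have "sphere (0::real^'k) 1 \<noteq> {}"
    by (metis norm_axis_1 mem_sphere_0 empty_iff)
  then obtain v0 where v0: "v0 \<in> sphere 0 1" and v0min: "\<And>y. y \<in> sphere 0 1 \<Longrightarrow> g v0 \<le> g y"
    using continuous_attains_inf[OF compact_sphere _ contg] by blast
  define m where "m = g v0"
  have nv0: "norm v0 = 1" using v0 by simp
  have gen: "m * (norm z)^2 \<le> (norm (M *v z))^2" for z
  proof (cases "z = 0")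
    case True then show ?thesis by simp
  next
    case False
    then have nz: "norm z > 0" by simp
    have "(z /\<^sub>R norm z) \<in> sphere 0 1" using nz by simp
    then have "m \<le> g (z /\<^sub>R norm z)" using v0min m_def by blast
    also have "g (z /\<^sub>R norm z) = (norm (M *v z))^2 / (norm z)^2"
      unfolding g_def by (simp add: matrix_vector_mult_scaleR power_divide power_mult_distrib divide_inverse power_inverse)
    finally show ?thesis using nz by (simp add: pos_le_divide_eq)
  qed
  have m0: "m \<ge> 0" unfolding m_def g_def by simp
  define w where "w = K *v v0 - m *\<^sub>R v0"
  have key: "0 \<le> 2 * t * (w \<bullet> w) + t^2 * ((norm (M *v w))^2 - m * (norm w)^2)" for t
  proof -
    have "m * (norm (v0 + t *\<^sub>R w))^2 \<le> (norm (M *v (v0 + t *\<^sub>R w)))^2" by (rule gen)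
    moreover have "(norm (v0 + t *\<^sub>R w))^2 = 1 + 2 * t * (v0 \<bullet> w) + t^2 * (norm w)^2"
      using nv0 norm_sq_expand[of v0 t w] by simp
    moreover have "(norm (M *v (v0 + t *\<^sub>R w)))^2 = m + 2 * t * ((M *v v0) \<bullet> (M *v w)) + t^2 * (norm (M *v w))^2"
      unfolding m_def g_def
      using norm_sq_expand[of "M *v v0" t "M *v w"] by (simp add: matrix_vector_right_distrib matrix_vector_mult_scaleR)
    moreover have "(M *v v0) \<bullet> (M *v w) = w \<bullet> w + m * (v0 \<bullet> w)"
      using Kin[of v0 w] unfolding w_def by (simp add: inner_diff_left)
    ultimately show ?thesis by (simp add: algebra_simps)
  qed
  have "w \<bullet> w = 0"
  proof (rule ccontr)
    assume "w \<bullet> w \<noteq> 0"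
    then have a: "w \<bullet> w > 0" by (simp add: order_le_neq_trans)
    define b where "b = (norm (M *v w))^2 - m * (norm w)^2"
    define t where "t = - (w \<bullet> w) / (\<bar>b\<bar> + 1)"
    have "0 \<le> 2 * t * (w \<bullet> w) + t^2 * b" using key[of t] b_def by simp
    also have "\<dots> \<le> 2 * t * (w \<bullet> w) + t^2 * \<bar>b\<bar>"
      by (simp add: mult_left_mono)
    also have "\<dots> = (w \<bullet> w)^2 * (\<bar>b\<bar> - 2 * (\<bar>b\<bar> + 1)) / (\<bar>b\<bar> + 1)^2"
    proof -
      have "\<And>c B::real. B \<ge> 0 \<Longrightarrow> 2*(-c/(B+1))*c + (-c/(B+1))^2 * B = c^2*(B - 2*(B+1))/(B+1)^2"
      proof -
        fix c B :: real assume "B \<ge> 0"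
        then have h: "B + 1 \<noteq> 0" by simp
        have g: "\<And>D::real. D \<noteq> 0 \<Longrightarrow> 2*(-c/D)*c + (-c/D)^2 * B = c^2*(B - 2*D)/D^2"
          by (simp add: field_simps power2_eq_square)
        show "2*(-c/(B+1))*c + (-c/(B+1))^2 * B = c^2*(B - 2*(B+1))/(B+1)^2"
          using g[OF h] .
      qed
      then show ?thesis unfolding t_def by simp
    qed
    also have "\<dots> < 0" using a
      by (intro divide_neg_pos mult_pos_neg) auto
    finally show False by simp
  qed
  then have "K *v v0 = m *\<^sub>R v0" unfolding w_def by simp
  moreover have "v0 \<noteq> 0" using nv0 by auto
  ultimately have mS: "m \<in> Ss" unfolding Ss_def by blast
  have lb: "m \<le> l" if lS: "l \<in> Ss" for l
  proof -
    obtain v where v: "v \<noteq> 0" "K *v v = l *\<^sub>R v" using lS by (auto simp: Ss_def)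
    have "l * (norm v)^2 = (K *v v) \<bullet> v" using v by (simp add: power2_norm_eq_inner)
    also have "\<dots> = (norm (M *v v))^2" unfolding Kin by (simp add: power2_norm_eq_inner)
    finally have "m * (norm v)^2 \<le> l * (norm v)^2" using gen[of v] by simp
    moreover have "(norm v)^2 > 0" using v by simp
    ultimately show ?thesis by (meson mult_le_cancel_right_pos)
  qed
  have "Min Ss = m"
    using finS mS lb by (intro Min_eqI) auto
  then have sm: "sigma_min M = sqrt m" unfolding sigma_min_def Ss_def K_def by simp
  have "sqrt m * norm v = sqrt (m * (norm v)^2)" by (simp add: real_sqrt_mult)
  also have "\<dots> \<le> sqrt ((norm (M *v v))^2)" using gen[of v] real_sqrt_le_mono by blast
  also have "\<dots> = norm (M *v v)" by simp
  finally show ?thesis using sm m0 by simp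
qed

lemma sigma_min_le: "sigma_min M * norm v \<le> norm (M *v v)"
  using sigma_min_both by blast

lemma sigma_min_nonneg: "sigma_min M \<ge> 0"
  using sigma_min_both by blast

lemma matrix_inv_both:
  assumes "invertible (M::'a::semiring_1^'n^'m)"
  shows "M ** matrix_inv M = mat 1 \<and> matrix_inv M ** M = mat 1"
  using assms unfolding invertible_def matrix_inv_def by (rule someI_ex)

definition cnjv :: "complex^'n \<Rightarrow> complex^'n" where "cnjv v = (\<chi> i. cnj (v $ i))"
definition cnjm :: "complex^'n^'m \<Rightarrow> complex^'n^'m" where "cnjm M = (\<chi> i j. cnj (M $ i $ j))"

lemma cnjv_mult: "cnjv (M *v v) = cnjm M *v cnjv v"
  by (simp add: vec_eq_iff cnjv_def cnjm_def matrix_vector_mult_def)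

lemma cnjm_mult: "cnjm (M ** N) = cnjm M ** cnjm N"
  by (simp add: vec_eq_iff cnjm_def matrix_matrix_mult_def)

lemma cnjm_cmat: "cnjm (cmat A) = cmat A"
  by (simp add: vec_eq_iff cnjm_def cmat_def)

lemma cnjv_cvec: "cnjv (cvec x) = cvec x"
  by (simp add: vec_eq_iff cnjv_def cvec_def)

lemma cnjm_cdiag: "cnjm (cdiag lam) = cdiag (\<lambda>i. cnj (lam i))"
  by (simp add: vec_eq_iff cnjm_def cdiag_def)

lemma cvec_mult: "cvec (A *v x) = cmat A *v cvec x"
  by (simp add: vec_eq_iff cvec_def cmat_def matrix_vector_mult_def)

lemma cvec_add: "cvec (x + y) = cvec x + cvec y"
  by (simp add: vec_eq_iff cvec_def)

lemma cvec_diff: "cvec (x - y) = cvec x - cvec y"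
  by (simp add: vec_eq_iff cvec_def)

lemma cvec_inj: "cvec x = cvec y \<Longrightarrow> x = y"
  by (simp add: vec_eq_iff cvec_def)

lemma sum_delta_mult1: "(\<Sum>k\<in>UNIV. (if i = k then a else 0) * f k) = (a::'a::comm_semiring_1) * f (i::'n::finite)"
proof -
  have "(\<Sum>k\<in>UNIV. (if i = k then a else 0) * f k) = (\<Sum>k\<in>UNIV. if i = k then a * f k else 0)"
    by (rule sum.cong) auto
  then show ?thesis by simp
qed

lemma sum_delta_mult2: "(\<Sum>k\<in>UNIV. f k * (if k = j then a k else 0)) = f (j::'n::finite) * (a j::'a::comm_semiring_1)"
proof -
  have "(\<Sum>k\<in>UNIV. f k * (if k = j then a k else 0)) = (\<Sum>k\<in>UNIV. if k = j then f j * a j else 0)"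
    by (rule sum.cong) auto
  then show ?thesis by simp
qed

lemma cdiag_mult_entry: "(cdiag lam ** T) $ i $ j = lam i * T $ i $ j"
  by (simp add: matrix_matrix_mult_def cdiag_def sum_delta_mult1)

lemma mult_cdiag_entry: "(T ** cdiag lam) $ i $ j = T $ i $ j * lam j"
  by (simp add: matrix_matrix_mult_def cdiag_def sum_delta_mult2)

lemma cdiag_vec: "cdiag lam *v c = (\<chi> i. lam i * c $ i)"
  by (simp add: vec_eq_iff matrix_vector_mult_def cdiag_def sum_delta_mult1)

lemma E_u_invariant:
  assumes "spectral_assumption A S lam" "x \<in> E_u S lam"
  shows "A *v x \<in> E_u S lam"
proof -
  obtain c where c: "\<forall>i. cmod (lam i) \<le> 1 \<longrightarrow> c $ i = 0" "cvec x = S *v c"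
    using assms(2) unfolding E_u_def by blast
  have "cvec (A *v x) = (cmat A ** S) *v c" by (simp add: cvec_mult c matrix_vector_mul_assoc)
  also have "\<dots> = S *v (cdiag lam *v c)" using assms(1)
    by (simp add: spectral_assumption_def matrix_vector_mul_assoc)
  finally show ?thesis unfolding E_u_def using c(1)
    by (intro CollectI exI[of _ "cdiag lam *v c"]) (auto simp: cdiag_vec)
qed

lemma E_s_invariant:
  assumes "spectral_assumption A S lam" "x \<in> E_s S lam"
  shows "A *v x \<in> E_s S lam"
proof -
  obtain c where c: "\<forall>i. cmod (lam i) \<ge> 1 \<longrightarrow> c $ i = 0" "cvec x = S *v c"
    using assms(2) unfolding E_s_def by blast
  have "cvec (A *v x) = (cmat A ** S) *v c" by (simp add: cvec_mult c matrix_vector_mul_assoc)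
  also have "\<dots> = S *v (cdiag lam *v c)" using assms(1)
    by (simp add: spectral_assumption_def matrix_vector_mul_assoc)
  finally show ?thesis unfolding E_s_def using c(1)
    by (intro CollectI exI[of _ "cdiag lam *v c"]) (auto simp: cdiag_vec)
qed

lemma E_inter:
  assumes "spectral_assumption A S lam" "x \<in> E_u S lam" "x \<in> E_s S lam"
  shows "x = 0"
proof -
  obtain c where c: "\<forall>i. cmod (lam i) \<le> 1 \<longrightarrow> c $ i = 0" "cvec x = S *v c"
    using assms(2) unfolding E_u_def by blast
  obtain d where d: "\<forall>i. cmod (lam i) \<ge> 1 \<longrightarrow> d $ i = 0" "cvec x = S *v d"
    using assms(3) unfolding E_s_def by blast
  have inv: "invertible S" using assms(1) spectral_assumption_def by blast
  have "c = d" using inj_matrix_vector_mult[OF inv] c(2) d(2) by (auto dest: injD)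
  then have "c = 0" using c(1) d(1) by (metis linorder_linear vec_eq_iff zero_index)
  then have "cvec x = S *v 0" using c(2) by simp
  then have "cvec x = cvec 0" by (simp add: vec_eq_iff cvec_def)
  then show ?thesis by (rule cvec_inj)
qed

lemma E_sum:
  assumes "spectral_assumption A S lam"
  shows "\<exists>a b. a \<in> E_u S lam \<and> b \<in> E_s S lam \<and> x = a + b"
proof -
  have inv: "invertible S" and AS: "cmat A ** S = S ** cdiag lam" and ne1: "\<And>i. cmod (lam i) \<noteq> 1"
    using assms spectral_assumption_def by auto
  define Si where "Si = matrix_inv S"
  have SSi: "S ** Si = mat 1" and SiS: "Si ** S = mat 1" using matrix_inv_both[OF inv] Si_def by auto
  define T where "T = Si ** cnjm S"
  have ST: "S ** T = cnjm S" unfolding T_def by (simp add: matrix_mul_assoc SSi)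
  have "cmat A ** cnjm S = cnjm S ** cdiag (\<lambda>i. cnj (lam i))"
    by (metis AS cnjm_cdiag cnjm_cmat cnjm_mult)
  then have "S ** (cdiag lam ** T) = S ** (T ** cdiag (\<lambda>i. cnj (lam i)))"
    by (metis AS ST matrix_mul_assoc)
  then have "Si ** (S ** (cdiag lam ** T)) = Si ** (S ** (T ** cdiag (\<lambda>i. cnj (lam i))))" by simp
  then have DT: "cdiag lam ** T = T ** cdiag (\<lambda>i. cnj (lam i))"
    by (simp add: matrix_mul_assoc SiS)
  have Tz: "T $ i $ j = 0" if "cmod (lam i) \<noteq> cmod (lam j)" for i j
  proof -
    have "lam i * T $ i $ j = T $ i $ j * cnj (lam j)"
      using arg_cong[OF DT, of "\<lambda>M. M $ i $ j"] by (simp add: cdiag_mult_entry mult_cdiag_entry)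
    then have "(lam i - cnj (lam j)) * T $ i $ j = 0" by (simp add: algebra_simps)
    moreover have "lam i \<noteq> cnj (lam j)" using that by auto
    ultimately show ?thesis by simp
  qed
  define c where "c = Si *v cvec x"
  have Sc: "S *v c = cvec x" unfolding c_def by (simp add: matrix_vector_mul_assoc SSi)
  define cu where "cu = (\<chi> i. if cmod (lam i) > 1 then c $ i else 0)"
  define cs where "cs = c - cu"
  have "cnjm S *v cnjv c = cvec x" using Sc cnjv_mult cnjv_cvec by metis
  then have "S *v (T *v cnjv c) = S *v c" using Sc ST by (simp add: matrix_vector_mul_assoc)
  then have Tc: "T *v cnjv c = c"
    using inj_matrix_vector_mult[OF inv] by (auto dest: injD)
  have Tcu: "T *v cnjv cu = cu"
  proof (subst vec_eq_iff, rule allI)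
    fix i
    show "(T *v cnjv cu) $ i = cu $ i"
    proof (cases "cmod (lam i) > 1")
      case True
      have Tz': "\<And>j. \<not> 1 < cmod (lam j) \<Longrightarrow> T $ i $ j = 0" using Tz True by force
      have "(T *v cnjv cu) $ i = (T *v cnjv c) $ i"
        unfolding matrix_vector_mult_def cnjv_def cu_def
        by (auto intro!: sum.cong simp: Tz' True)
      then show ?thesis using Tc True by (simp add: cu_def)
    next
      case False
      have Tz': "\<And>j. 1 < cmod (lam j) \<Longrightarrow> T $ i $ j = 0" using Tz False by force
      have "(T *v cnjv cu) $ i = 0"
        unfolding matrix_vector_mult_def cnjv_def cu_def
        by (auto intro!: sum.neutral simp: Tz' False)
      then show ?thesis using False by (simp add: cu_def)
    qed
  qed
  define y where "y = S *v cu"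
  have "cnjv y = y" unfolding y_def by (simp add: cnjv_mult ST[symmetric] matrix_vector_mul_assoc[symmetric] Tcu)
  then have yr: "cnj (y $ i) = y $ i" for i by (metis cnjv_def vec_lambda_beta)
  define a where "a = (\<chi> i. Re (y $ i))"
  have ca: "cvec a = y"
    unfolding a_def cvec_def vec_eq_iff using yr by (simp add: complex_eq_iff)
  have aE: "a \<in> E_u S lam" unfolding E_u_def using ca y_def
    by (intro CollectI exI[of _ cu]) (auto simp: cu_def)
  have "cvec (x - a) = S *v cs" using ca Sc y_def cs_def
    by (simp add: cvec_diff matrix_vector_mult_diff_distrib)
  moreover have "\<forall>i. cmod (lam i) \<ge> 1 \<longrightarrow> cs $ i = 0"
    using ne1 by (auto simp: cs_def cu_def order_le_neq_trans)
  ultimately have "x - a \<in> E_s S lam" unfolding E_s_def by blast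
  then show ?thesis using aE by (intro exI[of _ a] exI[of _ "x - a"]) simp
qed

declare transpose_matrix_vector[simp del]

lemma mv_neg: "M *v (- v) = - (M *v (v::real^'k))"
  by (simp add: vec_eq_iff matrix_vector_mult_def sum_negf)

lemma tdot: "(transpose P *v y) \<bullet> c = y \<bullet> ((P::real^'k^'n) *v c)"
  unfolding transpose_matrix_vector by (rule dot_lmul_matrix)

lemma onb_inv: "orthonormal_basis_matrix P V \<Longrightarrow> transpose P *v (P *v c) = c"
  unfolding orthonormal_basis_matrix_def by (simp add: matrix_vector_mul_assoc)

lemma onb_norm: assumes "orthonormal_basis_matrix P V" shows "norm (P *v c) = norm c"
proof -
  have "(P *v c) \<bullet> (P *v c) = c \<bullet> c"
    using tdot[of P "P *v c" c] onb_inv[OF assms] by (simp add: inner_commute)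
  then show ?thesis by (simp add: norm_eq_sqrt_inner)
qed

lemma onb_in: "orthonormal_basis_matrix P V \<Longrightarrow> P *v c \<in> V"
  unfolding orthonormal_basis_matrix_def by auto

lemma onb_ex: "orthonormal_basis_matrix P V \<Longrightarrow> y \<in> V \<Longrightarrow> \<exists>c. y = P *v c"
  unfolding orthonormal_basis_matrix_def by auto

lemma onb_perp:
  assumes "orthonormal_basis_matrix P2 (orthogonal_comp V)" "a \<in> V"
  shows "transpose P2 *v a = 0"
proof -
  define w where "w = transpose P2 *v a"
  have "P2 *v w \<in> orthogonal_comp V" using onb_in[OF assms(1)] .
  then have "a \<bullet> (P2 *v w) = 0" using assms(2) unfolding orthogonal_comp_def orthogonal_def by auto
  moreover have "w \<bullet> w = a \<bullet> (P2 *v w)" unfolding w_def by (rule tdot)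
  ultimately have "w \<bullet> w = 0" by simp
  then show ?thesis unfolding w_def by simp
qed

lemma norm_split:
  assumes ob1: "orthonormal_basis_matrix P1 V" and ob2: "orthonormal_basis_matrix P2 (orthogonal_comp V)"
  shows "(norm (transpose P1 *v y))^2 + (norm (transpose P2 *v y))^2 = (norm y)^2"
proof -
  define a where "a = P1 *v (transpose P1 *v y)"
  define b where "b = y - a"
  have aV: "a \<in> V" unfolding a_def by (rule onb_in[OF ob1])
  have P1b: "transpose P1 *v b = 0"
    unfolding b_def a_def by (simp add: matrix_vector_mult_diff_distrib onb_inv[OF ob1])
  have bperp: "e \<bullet> b = 0" if eV: "e \<in> V" for e
  proof -
    obtain c where c: "e = P1 *v c" using onb_ex[OF ob1 eV] by blast
    have "e \<bullet> b = (transpose P1 *v b) \<bullet> c" using tdot[of P1 b c] c by (simp add: inner_commute)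
    then show ?thesis using P1b by simp
  qed
  then have "b \<in> orthogonal_comp V" unfolding orthogonal_comp_def orthogonal_def by auto
  then obtain d where d: "b = P2 *v d" using onb_ex[OF ob2] by blast
  have "transpose P2 *v y = transpose P2 *v a + transpose P2 *v b"
    unfolding b_def by (simp add: matrix_vector_right_distrib[symmetric])
  also have "\<dots> = d" using onb_perp[OF ob2 aV] d onb_inv[OF ob2] by simp
  finally have e2: "transpose P2 *v y = d" .
  have "orthogonal a b" using bperp[OF aV] unfolding orthogonal_def .
  then have "(norm y)^2 = (norm a)^2 + (norm b)^2"
    using norm_add_Pythagorean[of a b] unfolding b_def by simp
  also have "norm a = norm (transpose P1 *v y)" unfolding a_def by (rule onb_norm[OF ob1])
  also have "norm b = norm d" using d onb_norm[OF ob2] by simp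
  finally show ?thesis using e2 by simp
qed

lemma block_mult:
  "block_cols P1 Q2 *v z = P1 *v (\<chi> a. z $ Inl a) + Q2 *v (\<chi> b. z $ Inr b)"
proof -
  have "(block_cols P1 Q2 *v z) $ i = (P1 *v (\<chi> a. z $ Inl a)) $ i + (Q2 *v (\<chi> b. z $ Inr b)) $ i" for i
  proof -
    have "(block_cols P1 Q2 *v z) $ i = (\<Sum>j\<in>UNIV <+> UNIV. block_cols P1 Q2 $ i $ j * z $ j)"
      by (simp add: matrix_vector_mult_def UNIV_Plus_UNIV)
    also have "\<dots> = (\<Sum>a\<in>UNIV. P1 $ i $ a * z $ Inl a) + (\<Sum>b\<in>UNIV. Q2 $ i $ b * z $ Inr b)"
      by (subst sum.Plus) (auto simp: block_cols_def)
    finally show ?thesis by (simp add: matrix_vector_mult_def)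
  qed
  then show ?thesis by (simp add: vec_eq_iff)
qed

lemma R1_mult: "R1 R *v y = (\<chi> a. (R *v y) $ Inl a)"
  by (simp add: vec_eq_iff R1_def matrix_vector_mult_def)

lemma R2_mult: "R2 R *v y = (\<chi> a. (R *v y) $ Inr a)"
  by (simp add: vec_eq_iff R2_def matrix_vector_mult_def)

definition join :: "real^'k \<Rightarrow> real^'m \<Rightarrow> real^('k + 'm)" where
  "join a b = (\<chi> j. case j of Inl i \<Rightarrow> a $ i | Inr i \<Rightarrow> b $ i)"

lemma join_Inl: "(\<chi> i. join a b $ Inl i) = a" by (simp add: join_def vec_eq_iff)
lemma join_Inr: "(\<chi> i. join a b $ Inr i) = b" by (simp add: join_def vec_eq_iff)
lemma join_split: "join (\<chi> i. z $ Inl i) (\<chi> i. z $ Inr i) = z"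
  by (simp add: join_def vec_eq_iff split: sum.split)

lemma block_invertible:
  fixes A :: "real^'n^'n" and P1 :: "real^'k^'n" and Q2 :: "real^'m^'n"
  assumes spec: "spectral_assumption A S lam"
    and P1: "orthonormal_basis_matrix P1 (E_u S lam)"
    and Q2: "orthonormal_basis_matrix Q2 (E_s S lam)"
  shows "invertible (block_cols P1 Q2)"
proof -
  define Q where "Q = block_cols P1 Q2"
  have lin: "linear ((*v) Q)" by simp
  have inj: "inj ((*v) Q)"
  proof (rule linear_inj_iff_eq_0[THEN iffD2, OF lin], intro allI impI)
    fix z assume "Q *v z = 0"
    then have eq: "P1 *v (\<chi> a. z $ Inl a) = Q2 *v (- (\<chi> b. z $ Inr b))"
      unfolding Q_def block_mult mv_neg by (simp add: eq_neg_iff_add_eq_0)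
    have "P1 *v (\<chi> a. z $ Inl a) = 0"
      using E_inter[OF spec onb_in[OF P1] ] eq onb_in[OF Q2] by metis
    then have z1: "(\<chi> a. z $ Inl a) = 0" using onb_inv[OF P1] by (metis matrix_vector_mult_0_right)
    then have "Q2 *v (- (\<chi> b. z $ Inr b)) = 0" using eq by simp
    then have "- (\<chi> b. z $ Inr b) = 0" using onb_inv[OF Q2] by (metis matrix_vector_mult_0_right)
    then have z2: "(\<chi> b. z $ Inr b) = 0" by simp
    show "z = 0" unfolding vec_eq_iff
    proof
      fix j show "z $ j = 0 $ j" using z1 z2 by (cases j) (auto simp: vec_eq_iff)
    qed
  qed
  have surj: "surj ((*v) Q)"
  proof -
    have "\<exists>z. y = Q *v z" for y
    proof -
    obtain a b where ab: "a \<in> E_u S lam" "b \<in> E_s S lam" "y = a + b" using E_sum[OF spec] by blast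
    obtain c where c: "a = P1 *v c" using onb_ex[OF P1 ab(1)] by blast
    obtain d where d: "b = Q2 *v d" using onb_ex[OF Q2 ab(2)] by blast
    have "Q *v join c d = y" unfolding Q_def block_mult join_Inl join_Inr using ab c d by simp
    then show ?thesis by metis
    qed
    then show ?thesis unfolding surj_def by blast
  qed
  obtain g where g: "linear g" "g \<circ> (*v) Q = id" using linear_injective_left_inverse[OF lin inj] by blast
  obtain h where h: "linear h" "(*v) Q \<circ> h = id" using linear_surjective_right_inverse[OF lin surj] by blast
  have G: "matrix g ** Q = mat 1"
    unfolding matrix_eq using g by (simp add: matrix_vector_mul_assoc[symmetric] matrix_vector_mul(2) fun_eq_iff o_def)
  have H: "Q ** matrix h = mat 1"
    unfolding matrix_eq using h by (simp add: matrix_vector_mul_assoc[symmetric] matrix_vector_mul(2) fun_eq_iff o_def)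
  have "matrix g = matrix h"
    by (metis G H matrix_mul_assoc matrix_mul_lid matrix_mul_rid)
  then show ?thesis unfolding invertible_def Q_def[symmetric] using G H by metis
qed

theorem mainTheorem11:
  fixes A :: "real^'n^'n" and S :: "complex^'n^'n" and lam :: "'n \<Rightarrow> complex"
    and P1 :: "real^'k^'n" and P2 :: "real^'m^'n" and Q2 :: "real^'m^'n"
    and B :: "real^'k^'n"
    and \<xi> \<gamma> \<gamma>p \<alpha> :: real and x :: "real^'n" and u :: "real^'k"
  assumes spec: "spectral_assumption A S lam"
    and P1: "orthonormal_basis_matrix P1 (E_u S lam)"
    and P2: "orthonormal_basis_matrix P2 (orthogonal_comp (E_u S lam))"
    and Q2: "orthonormal_basis_matrix Q2 (E_s S lam)"
    and xi: "0 < \<xi>" "\<xi> < 1"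
    and close: "sigma_min (transpose P2 ** Q2) > 1 - \<xi>"
    and gam: "\<gamma> > 0" and gamp: "\<gamma>p > 1"
    and hx: "norm (R1 (matrix_inv (block_cols P1 Q2)) *v x)
               > \<gamma>p * norm (R2 (matrix_inv (block_cols P1 Q2)) *v x)"
    and hu: "norm u \<le> \<alpha> * norm x"
    and halpha: "\<alpha> * ((1 + sqrt (2 * \<xi>) / (1 - \<xi>) + \<gamma> / (1 - \<xi>)) * opnorm B)
       < \<gamma>p / (\<gamma>p + 1) * sigma_min (transpose P1 ** A ** P1)
         - \<gamma> / (\<gamma>p - 1) * (1 / (1 - \<xi>)) * opnorm A"
  shows "norm (R1 (matrix_inv (block_cols P1 Q2)) *v (A *v x + B *v u))
           > \<gamma> * norm (R2 (matrix_inv (block_cols P1 Q2)) *v (A *v x + B *v u))"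
proof -
  define Q where "Q = block_cols P1 Q2"
  define R where "R = matrix_inv Q"
  define r1 where "r1 = (\<lambda>y. R1 R *v y)"
  define r2 where "r2 = (\<lambda>y. R2 R *v y)"
  have QR: "Q ** R = mat 1" and RQ: "R ** Q = mat 1"
    using matrix_inv_both[OF block_invertible[OF spec P1 Q2]] unfolding Q_def R_def by auto
  have D: "y = P1 *v r1 y + Q2 *v r2 y" for y
  proof -
    have "y = Q *v (R *v y)" by (simp add: matrix_vector_mul_assoc QR)
    then show ?thesis unfolding Q_def block_mult r1_def r2_def R1_mult R2_mult .
  qed
  have U: "r1 y = a \<and> r2 y = b" if "y = P1 *v a + Q2 *v b" for y a b
  proof -
    have "Q *v join a b = y" unfolding Q_def block_mult join_Inl join_Inr using that by simp
    then have "R *v y = join a b" by (metis RQ matrix_vector_mul_assoc matrix_vector_mul_lid)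
    then show ?thesis unfolding r1_def r2_def R1_mult R2_mult by (simp add: join_Inl join_Inr)
  qed
  have r1add: "r1 (y + z) = r1 y + r1 z" and r2add: "r2 (y + z) = r2 y + r2 z" for y z
    unfolding r1_def r2_def by (simp_all add: matrix_vector_right_distrib)
  define \<sigma>2 where "\<sigma>2 = sigma_min (transpose P2 ** Q2)"
  have P2Q2: "(1 - \<xi>) * norm v \<le> norm (transpose P2 *v (Q2 *v v))" for v
  proof -
    have "(1 - \<xi>) * norm v \<le> \<sigma>2 * norm v" using close \<sigma>2_def by (intro mult_right_mono) auto
    also have "\<dots> \<le> norm (transpose P2 *v (Q2 *v v))"
      unfolding \<sigma>2_def matrix_vector_mul_assoc by (rule sigma_min_le)
    finally show ?thesis .
  qed
  have P2le: "norm (transpose P2 *v y) \<le> norm y" for y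
  proof -
    have "(norm (transpose P2 *v y))^2 \<le> (norm y)^2"
      using norm_split[OF P1 P2, of y] zero_le_power2[of "norm (transpose P1 *v y)"] by linarith
    then show ?thesis by (rule power2_le_imp_le[OF _ norm_ge_zero])
  qed
  have P1le: "norm (transpose P1 *v y) \<le> norm y" for y
  proof -
    have "(norm (transpose P1 *v y))^2 \<le> (norm y)^2"
      using norm_split[OF P1 P2, of y] zero_le_power2[of "norm (transpose P2 *v y)"] by linarith
    then show ?thesis by (rule power2_le_imp_le[OF _ norm_ge_zero])
  qed
  have B2: "(1 - \<xi>) * norm (r2 y) \<le> norm y" for y
  proof -
    have "transpose P2 *v y = transpose P2 *v (P1 *v r1 y + Q2 *v r2 y)" by (rule arg_cong[OF D])
    also have "\<dots> = transpose P2 *v (P1 *v r1 y) + transpose P2 *v (Q2 *v r2 y)"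
      by (simp add: matrix_vector_right_distrib)
    also have "transpose P2 *v (P1 *v r1 y) = 0" by (rule onb_perp[OF P2 onb_in[OF P1]])
    finally have "transpose P2 *v y = transpose P2 *v (Q2 *v r2 y)" by simp
    then show ?thesis using P2Q2[of "r2 y"] P2le[of y] by simp
  qed
  have B2': "norm (r2 y) \<le> norm y / (1 - \<xi>)" for y
    using B2[of y] xi by (simp add: pos_le_divide_eq mult.commute)
  have P1Q2: "norm (transpose P1 *v (Q2 *v v)) \<le> sqrt (2 * \<xi>) * norm v" for v
  proof -
    have "(norm (transpose P1 *v (Q2 *v v)))^2 = (norm (Q2 *v v))^2 - (norm (transpose P2 *v (Q2 *v v)))^2"
      using norm_split[OF P1 P2, of "Q2 *v v"] by linarith
    also have "norm (Q2 *v v) = norm v" by (rule onb_norm[OF Q2])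
    also have "(norm v)^2 - (norm (transpose P2 *v (Q2 *v v)))^2 \<le> (norm v)^2 - ((1 - \<xi>) * norm v)^2"
    proof -
      have h0: "0 \<le> (1 - \<xi>) * norm v" using xi by simp
      have "((1 - \<xi>) * norm v)^2 \<le> (norm (transpose P2 *v (Q2 *v v)))^2"
        using P2Q2[of v] h0 by (rule power_mono)
      then show ?thesis by linarith
    qed
    also have "\<dots> \<le> (sqrt (2 * \<xi>) * norm v)^2"
    proof -
      have e1: "(sqrt (2 * \<xi>) * norm v)^2 = 2 * \<xi> * (norm v)^2"
        using xi by (simp add: power_mult_distrib)
      have e2: "(norm v)^2 - ((1 - \<xi>) * norm v)^2 = 2 * \<xi> * (norm v)^2 - \<xi>^2 * (norm v)^2"
        by (simp add: power2_eq_square algebra_simps)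
      have "\<xi>^2 * (norm v)^2 \<ge> 0" by simp
      then show ?thesis unfolding e1 e2 by linarith
    qed
    finally have "(norm (transpose P1 *v (Q2 *v v)))^2 \<le> (sqrt (2 * \<xi>) * norm v)^2" .
    moreover have "0 \<le> sqrt (2 * \<xi>) * norm v" using xi by simp
    ultimately show ?thesis by (rule power2_le_imp_le)
  qed
  define c1 where "c1 = 1 + sqrt (2 * \<xi>) / (1 - \<xi>)"
  have B1: "norm (r1 y) \<le> c1 * norm y" for y
  proof -
    have "transpose P1 *v y = transpose P1 *v (P1 *v r1 y + Q2 *v r2 y)" by (rule arg_cong[OF D])
    also have "\<dots> = transpose P1 *v (P1 *v r1 y) + transpose P1 *v (Q2 *v r2 y)"
      by (simp add: matrix_vector_right_distrib)
    finally have "transpose P1 *v y = transpose P1 *v (P1 *v r1 y) + transpose P1 *v (Q2 *v r2 y)" .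
    then have "r1 y = transpose P1 *v y - transpose P1 *v (Q2 *v r2 y)"
      using onb_inv[OF P1] by simp
    then have "norm (r1 y) \<le> norm (transpose P1 *v y) + norm (transpose P1 *v (Q2 *v r2 y))"
      by (metis norm_triangle_ineq4)
    also have "\<dots> \<le> norm y + sqrt (2 * \<xi>) * (norm y / (1 - \<xi>))"
      using P1le[of y] P1Q2[of "r2 y"] B2'[of y]
      by (smt (verit) mult_left_mono real_sqrt_ge_zero xi(1))
    finally show ?thesis unfolding c1_def by (simp add: algebra_simps)
  qed
  have nAle: "norm (A *v y) \<le> opnorm A * norm y" for y
    unfolding opnorm_def by (rule onorm) simp
  have nBle: "norm (B *v y) \<le> opnorm B * norm y" for y
    unfolding opnorm_def by (rule onorm) simp
  have nA0: "opnorm A \<ge> 0" unfolding opnorm_def by (rule onorm_pos_le) simp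
  have nB0: "opnorm B \<ge> 0" unfolding opnorm_def by (rule onorm_pos_le) simp
  define M1 where "M1 = transpose P1 ** A ** P1"
  define \<sigma>1 where "\<sigma>1 = sigma_min M1"
  have s10: "\<sigma>1 \<ge> 0" unfolding \<sigma>1_def by (rule sigma_min_nonneg)
  obtain a' where a': "A *v (P1 *v r1 x) = P1 *v a'"
    using onb_ex[OF P1 E_u_invariant[OF spec onb_in[OF P1]]] by blast
  have a'M: "a' = M1 *v r1 x"
    using arg_cong[OF a', of "\<lambda>v. transpose P1 *v v"] onb_inv[OF P1]
    unfolding M1_def by (simp add: matrix_vector_mul_assoc matrix_mul_assoc)
  obtain b' where b': "A *v (Q2 *v r2 x) = Q2 *v b'"
    using onb_ex[OF Q2 E_s_invariant[OF spec onb_in[OF Q2]]] by blast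
  have "A *v x = A *v (P1 *v r1 x + Q2 *v r2 x)" by (rule arg_cong[OF D])
  then have "A *v x = P1 *v a' + Q2 *v b'"
    by (simp add: matrix_vector_right_distrib a' b')
  then have rAx: "r1 (A *v x) = M1 *v r1 x" "r2 (A *v x) = b'" using U a'M by auto
  have "r2 (A *v (Q2 *v r2 x)) = b'" using U[of "A *v (Q2 *v r2 x)" 0 b'] b' by simp
  then have "(1 - \<xi>) * norm b' \<le> norm (A *v (Q2 *v r2 x))" using B2 by metis
  also have "\<dots> \<le> opnorm A * norm (r2 x)" using nAle onb_norm[OF Q2] by metis
  finally have hb': "(1 - \<xi>) * norm b' \<le> opnorm A * norm (r2 x)" .
  define X where "X = norm x"
  define a1 where "a1 = norm (r1 x)"
  define a2 where "a2 = norm (r2 x)"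
  define nA where "nA = opnorm A"
  define nB where "nB = opnorm B"
  define Uu where "Uu = norm u"
  have h3: "a1 > \<gamma>p * a2" using hx unfolding a1_def a2_def r1_def r2_def R_def Q_def .
  have a20: "a2 \<ge> 0" unfolding a2_def by simp
  have h4: "X \<le> a1 + a2"
  proof -
    have "X = norm (P1 *v r1 x + Q2 *v r2 x)" unfolding X_def by (rule arg_cong[OF D])
    then have "X \<le> norm (P1 *v r1 x) + norm (Q2 *v r2 x)" by (metis norm_triangle_ineq)
    then show ?thesis unfolding a1_def a2_def using onb_norm[OF P1] onb_norm[OF Q2] by simp
  qed
  have h5: "a1 \<le> X + a2"
  proof -
    have "x = P1 *v r1 x + Q2 *v r2 x" by (rule D)
    then have "P1 *v r1 x = x - Q2 *v r2 x" by (metis add_diff_cancel_right')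
    then have "norm (P1 *v r1 x) \<le> norm x + norm (Q2 *v r2 x)" by (metis norm_triangle_ineq4)
    then show ?thesis unfolding a1_def a2_def X_def using onb_norm[OF P1] onb_norm[OF Q2] by simp
  qed
  have h6: "Uu \<le> \<alpha> * X" using hu unfolding Uu_def X_def .
  have xi1: "1 - \<xi> > 0" using xi by simp
  define x' where "x' = A *v x + B *v u"
  have hr1: "norm (r1 x') \<ge> \<sigma>1 * a1 - c1 * nB * Uu"
  proof -
    have "r1 x' = M1 *v r1 x + r1 (B *v u)" unfolding x'_def r1add rAx ..
    then have "norm (r1 x') \<ge> norm (M1 *v r1 x) - norm (r1 (B *v u))"
      by (metis norm_diff_ineq)
    moreover have "norm (M1 *v r1 x) \<ge> \<sigma>1 * a1" unfolding \<sigma>1_def a1_def by (rule sigma_min_le)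
    moreover have "norm (r1 (B *v u)) \<le> c1 * (nB * Uu)"
    proof -
      have "c1 \<ge> 0" unfolding c1_def using xi by simp
      then show ?thesis using B1[of "B *v u"] nBle[of u] unfolding nB_def Uu_def
        by (meson mult_left_mono order_trans)
    qed
    ultimately show ?thesis by simp
  qed
  have hr2: "(1 - \<xi>) * norm (r2 x') \<le> nA * a2 + nB * Uu"
  proof -
    have "r2 x' = b' + r2 (B *v u)" unfolding x'_def r2add rAx ..
    then have "norm (r2 x') \<le> norm b' + norm (r2 (B *v u))" by (metis norm_triangle_ineq)
    then have "(1 - \<xi>) * norm (r2 x') \<le> (1 - \<xi>) * norm b' + (1 - \<xi>) * norm (r2 (B *v u))"
      using xi1 by (simp add: distrib_left[symmetric] mult_left_mono)
    also have "\<dots> \<le> nA * a2 + nB * Uu"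
      using hb' B2[of "B *v u"] nBle[of u] unfolding nA_def a2_def nB_def Uu_def by linarith
    finally show ?thesis .
  qed
  have gp: "\<gamma>p - 1 > 0" "\<gamma>p + 1 > 0" using gamp by auto
  have a2X: "a2 * (\<gamma>p - 1) \<le> X" using h3 h5 by (simp add: algebra_simps)
  have a1X: "a1 * (\<gamma>p + 1) \<ge> \<gamma>p * X"
  proof -
    have "\<gamma>p * X \<le> \<gamma>p * a1 + \<gamma>p * a2" using h4 gamp by (simp add: distrib_left[symmetric])
    then show ?thesis using h3 by (simp add: algebra_simps)
  qed
  have X0: "X > 0"
  proof -
    have "a1 > 0" using h3 a20 gamp by (smt (verit) mult_nonneg_nonneg)
    then have "r1 x \<noteq> 0" unfolding a1_def by auto
    then have "x \<noteq> 0" unfolding r1_def by auto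
    then show ?thesis unfolding X_def by simp
  qed
  have t1: "\<sigma>1 * a1 \<ge> \<gamma>p / (\<gamma>p + 1) * \<sigma>1 * X"
  proof -
    have "\<gamma>p / (\<gamma>p + 1) * X \<le> a1" using a1X gp by (simp add: field_simps)
    then show ?thesis using s10 by (metis mult.commute mult.left_commute mult_left_mono)
  qed
  have t2: "\<gamma> * nA * a2 \<le> \<gamma> / (\<gamma>p - 1) * nA * X"
  proof -
    have "a2 \<le> X / (\<gamma>p - 1)" using a2X gp by (simp add: field_simps)
    then have "(\<gamma> * nA) * a2 \<le> (\<gamma> * nA) * (X / (\<gamma>p - 1))"
      using gam nA0 unfolding nA_def by (intro mult_left_mono) auto
    then show ?thesis by simp
  qed
  define C where "C = (1 + sqrt (2 * \<xi>) / (1 - \<xi>) + \<gamma> / (1 - \<xi>)) * nB"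
  have C0: "C \<ge> 0" unfolding C_def nB_def using nB0 xi gam by simp
  have CU: "C * Uu \<le> \<alpha> * C * X" using h6 C0 by (metis mult.commute mult.left_commute mult_left_mono)
  have main: "(1 - \<xi>) * (norm (r1 x') - \<gamma> * norm (r2 x')) \<ge>
       (1 - \<xi>) * (\<sigma>1 * a1) - \<gamma> * nA * a2 - (1 - \<xi>) * C * Uu"
  proof -
    have f0: "(1 - \<xi>) * norm (r1 x') \<ge> (1 - \<xi>) * (\<sigma>1 * a1 - c1 * nB * Uu)"
      using hr1 xi1 by (simp add: mult_left_mono)
    have f1: "(1 - \<xi>) * norm (r1 x') \<ge> (1 - \<xi>) * (\<sigma>1 * a1) - (1 - \<xi>) * (c1 * nB * Uu)"
      using f0 by (simp add: right_diff_distrib)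
    have f2': "\<gamma> * ((1 - \<xi>) * norm (r2 x')) \<le> \<gamma> * (nA * a2 + nB * Uu)"
      using hr2 gam by (simp add: mult_left_mono)
    have f2: "\<gamma> * ((1 - \<xi>) * norm (r2 x')) \<le> \<gamma> * nA * a2 + \<gamma> * (nB * Uu)"
      using f2' by (simp add: algebra_simps)
    have f3': "(1 - \<xi>) * C = (1 - \<xi>) * c1 * nB + \<gamma> * nB"
    proof -
      have g: "\<And>d s g n::real. d \<noteq> 0 \<Longrightarrow> d * ((1 + s / d + g / d) * n) = d * (1 + s / d) * n + g * n"
        by (simp add: field_simps)
      show ?thesis unfolding C_def c1_def using xi1 by (intro g) simp
    qed
    have f3: "(1 - \<xi>) * C * Uu = (1 - \<xi>) * (c1 * nB * Uu) + \<gamma> * (nB * Uu)"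
      using arg_cong[OF f3', of "\<lambda>t. t * Uu"] by (simp add: algebra_simps)
    have eq: "(1 - \<xi>) * (norm (r1 x') - \<gamma> * norm (r2 x')) = (1 - \<xi>) * norm (r1 x') - \<gamma> * ((1 - \<xi>) * norm (r2 x'))"
      by (simp add: algebra_simps)
    show ?thesis unfolding eq using f1 f2 f3 by linarith
  qed
  have fin: "(1 - \<xi>) * (norm (r1 x') - \<gamma> * norm (r2 x')) > 0"
  proof -
    have sA: "(1 - \<xi>) * (\<sigma>1 * a1) \<ge> (1 - \<xi>) * (\<gamma>p / (\<gamma>p + 1) * \<sigma>1 * X)"
      using t1 xi1 by (intro mult_left_mono) auto
    have sB: "(1 - \<xi>) * (C * Uu) \<le> (1 - \<xi>) * (\<alpha> * C * X)"
      using CU xi1 by (intro mult_left_mono) (auto simp: mult.assoc)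
    have ineq: "(1 - \<xi>) * (\<gamma>p / (\<gamma>p + 1) * \<sigma>1 * X) - \<gamma> / (\<gamma>p - 1) * nA * X - (1 - \<xi>) * (\<alpha> * C * X)
       \<le> (1 - \<xi>) * (\<sigma>1 * a1) - \<gamma> * nA * a2 - (1 - \<xi>) * C * Uu"
      using sA sB t2 by (simp add: mult.assoc)
    have eqn: "(1 - \<xi>) * X * (\<gamma>p / (\<gamma>p + 1) * \<sigma>1 - \<gamma> / (\<gamma>p - 1) * (1 / (1 - \<xi>)) * nA - \<alpha> * C)
       = (1 - \<xi>) * (\<gamma>p / (\<gamma>p + 1) * \<sigma>1 * X) - \<gamma> / (\<gamma>p - 1) * nA * X - (1 - \<xi>) * (\<alpha> * C * X)"
    proof -
      have g: "\<And>d p q s n a c X::real. d \<noteq> 0 \<Longrightarrow>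
          d * X * (p * s - q * (1 / d) * n - a * c) = d * (p * s * X) - q * n * X - d * (a * c * X)"
        by (simp add: field_simps)
      show ?thesis using xi1 by (intro g) simp
    qed
    have pos: "(1 - \<xi>) * X * (\<gamma>p / (\<gamma>p + 1) * \<sigma>1 - \<gamma> / (\<gamma>p - 1) * (1 / (1 - \<xi>)) * nA - \<alpha> * C) > 0"
    proof (rule mult_pos_pos)
      show "(1 - \<xi>) * X > 0" using X0 xi1 by simp
      show "\<gamma>p / (\<gamma>p + 1) * \<sigma>1 - \<gamma> / (\<gamma>p - 1) * (1 / (1 - \<xi>)) * nA - \<alpha> * C > 0"
        using halpha unfolding C_def \<sigma>1_def M1_def nA_def nB_def by simp
    qed
    have "(1 - \<xi>) * (\<sigma>1 * a1) - \<gamma> * nA * a2 - (1 - \<xi>) * C * Uu > 0"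
      using ineq eqn pos by linarith
    then show ?thesis using main by linarith
  qed
  then have "norm (r1 x') - \<gamma> * norm (r2 x') > 0" using xi1 by (simp add: zero_less_mult_iff)
  then show ?thesis unfolding x'_def r1_def r2_def R_def Q_def by simp
qed
end
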